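(* Let $n\ge 1$ and let $\Omega=\Omega_e\cup\Omega_o\subset\mathbb{Z}_2^n\setminus\{\mathbf 0\}$, where $\Omega_e$ and $\Omega_o$ are both nonempty, every tuple in $\Omega_e$ has even Hamming weight, and every tuple in $\Omega_o$ has odd Hamming weight. Then $\mathrm{NEPS}(P_3,\ldots,P_3;\Omega)$ (with $n$ factors) does not exhibit perfect state transfer between any pair of distinct vertices. *)

theory Defs
  imports Complex_Main
begin

definition p3_adj :: "nat \<Rightarrow> nat \<Rightarrow> bool" where
  "p3_adj a b \<longleftrightarrow> (a = 0 \<and> b = 1) \<or> (a = 1 \<and> b = 0) \<or> (a = 1 \<and> b = 2) \<or> (a = 2 \<and> b = 1)"

text \<open>Vertex set of the n-fold product P3 x ... x P3: tuples (x_0,...,x_{n-1}),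
  represented as functions nat => nat, with entries in {0,1,2}, fixed to 0 beyond n.\<close>
definition neps_verts :: "nat \<Rightarrow> (nat \<Rightarrow> nat) set" where
  "neps_verts n = {x. \<forall>i. (i < n \<longrightarrow> x i < 3) \<and> (n \<le> i \<longrightarrow> x i = 0)}"

text \<open>A tuple beta in Z_2^n is represented by its support, a subset of {0..<n};
  its Hamming weight is the cardinality of the support.\<close>
definition neps_adj :: "nat \<Rightarrow> nat set set \<Rightarrow> (nat \<Rightarrow> nat) \<Rightarrow> (nat \<Rightarrow> nat) \<Rightarrow> bool" where
  "neps_adj n \<Omega> x y \<longleftrightarrow>
     (\<exists>\<beta>\<in>\<Omega>. \<forall>i<n. (i \<in> \<beta> \<longrightarrow> p3_adj (x i) (y i)) \<and> (i \<notin> \<beta> \<longrightarrow> x i = y i))"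

definition neps_adj_mat :: "nat \<Rightarrow> nat set set \<Rightarrow> (nat \<Rightarrow> nat) \<Rightarrow> (nat \<Rightarrow> nat) \<Rightarrow> complex" where
  "neps_adj_mat n \<Omega> x y = (if neps_adj n \<Omega> x y then 1 else 0)"

fun neps_adj_pow :: "nat \<Rightarrow> nat set set \<Rightarrow> nat \<Rightarrow> (nat \<Rightarrow> nat) \<Rightarrow> (nat \<Rightarrow> nat) \<Rightarrow> complex" where
  "neps_adj_pow n \<Omega> 0 x y = (if x = y then 1 else 0)"
| "neps_adj_pow n \<Omega> (Suc k) x y =
     (\<Sum>w\<in>neps_verts n. neps_adj_pow n \<Omega> k x w * neps_adj_mat n \<Omega> w y)"

definition neps_transition :: "nat \<Rightarrow> nat set set \<Rightarrow> real \<Rightarrow> (nat \<Rightarrow> nat) \<Rightarrow> (nat \<Rightarrow> nat) \<Rightarrow> complex" where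
  "neps_transition n \<Omega> t x y =
     (\<Sum>k. ((- \<i> * complex_of_real t) ^ k / of_nat (fact k)) * neps_adj_pow n \<Omega> k x y)"

definition neps_pst :: "nat \<Rightarrow> nat set set \<Rightarrow> (nat \<Rightarrow> nat) \<Rightarrow> (nat \<Rightarrow> nat) \<Rightarrow> bool" where
  "neps_pst n \<Omega> u v \<longleftrightarrow> (\<exists>t::real. cmod (neps_transition n \<Omega> t u v) = 1)"

end

theory Submission
  imports Defs
begin

definition ext :: "nat \<Rightarrow> nat set \<Rightarrow> (nat \<Rightarrow> nat) set" where
  "ext n S = {x. \<forall>i. (i < n \<longrightarrow> x i \<in> S) \<and> (n \<le> i \<longrightarrow> x i = 0)}"

lemma ext_Suc: "ext (Suc n) S = (\<lambda>(x,a). x(n:=a)) ` (ext n S \<times> S)"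
proof (rule set_eqI, rule iffI)
  fix y assume y: "y \<in> ext (Suc n) S"
  have "y(n:=0) \<in> ext n S" "y n \<in> S" using y by (auto simp: ext_def)
  moreover have "y = (y(n:=0))(n := y n)" by simp
  ultimately show "y \<in> (\<lambda>(x,a). x(n:=a)) ` (ext n S \<times> S)"
    by (intro rev_image_eqI[of "(y(n:=0), y n)"]) auto
next
  fix y assume "y \<in> (\<lambda>(x,a). x(n:=a)) ` (ext n S \<times> S)"
  then show "y \<in> ext (Suc n) S" by (auto simp: ext_def)
qed

lemma ext_inj: "inj_on (\<lambda>(x,a). x(n:=a)) (ext n S \<times> S)"
proof (rule inj_onI, clarify)
  fix x a y b assume xa: "x \<in> ext n S" "a \<in> S" "y \<in> ext n S" "b \<in> S" and eq: "x(n:=a) = y(n:=b)"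
  have "a = b" using fun_cong[OF eq, of n] by simp
  moreover have "x = y"
  proof
    fix i show "x i = y i"
      using fun_cong[OF eq, of i] xa by (cases "i = n") (auto simp: ext_def)
  qed
  ultimately show "x = y \<and> a = b" by simp
qed

lemma ext_0: "ext 0 S = {\<lambda>_. 0}"
  by (auto simp: ext_def)

lemma ext_finite: "finite S \<Longrightarrow> finite (ext n S)"
  by (induction n) (auto simp: ext_Suc ext_0 ext_inj intro!: finite_imageI)

lemma sum_prod_ext:
  fixes f :: "nat \<Rightarrow> nat \<Rightarrow> 'b::comm_semiring_1"
  assumes "finite S"
  shows "(\<Sum>x\<in>ext n S. \<Prod>i<n. f i (x i)) = (\<Prod>i<n. \<Sum>a\<in>S. f i a)"
proof (induction n)
  case 0 then show ?case by (simp add: ext_0)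
next
  case (Suc n)
  have "(\<Sum>x\<in>ext (Suc n) S. \<Prod>i<Suc n. f i (x i))
      = (\<Sum>p\<in>ext n S \<times> S. \<Prod>i<Suc n. f i (((fst p)(n := snd p)) i))"
    unfolding ext_Suc by (subst sum.reindex[OF ext_inj]) (simp add: case_prod_beta)
  also have "\<dots> = (\<Sum>p\<in>ext n S \<times> S. (\<Prod>i<n. f i (fst p i)) * f n (snd p))"
    by (intro sum.cong refl) (simp add: lessThan_Suc mult.commute)
  also have "\<dots> = (\<Sum>x\<in>ext n S. \<Sum>a\<in>S. (\<Prod>i<n. f i (x i)) * f n a)"
    by (subst sum.cartesian_product) (simp add: case_prod_beta)
  also have "\<dots> = (\<Sum>x\<in>ext n S. (\<Prod>i<n. f i (x i))) * (\<Sum>a\<in>S. f n a)"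
    by (simp add: sum_product)
  also have "\<dots> = (\<Prod>i<Suc n. \<Sum>a\<in>S. f i a)" using Suc by (simp add: lessThan_Suc mult.commute)
  finally show ?case .
qed

lemma verts_ext: "neps_verts n = ext n {0,1,2}"
  by (auto simp: neps_verts_def ext_def)

definition ev :: "nat \<Rightarrow> nat \<Rightarrow> real" where
  "ev m a = (if m = 0 then (if a = 1 then sqrt 2 / 2 else 1/2)
             else if m = 1 then (if a = 0 then sqrt 2 / 2 else if a = 1 then 0 else - sqrt 2 / 2)
             else (if a = 1 then - sqrt 2 / 2 else 1/2))"

definition mu :: "nat \<Rightarrow> real" where
  "mu m = (if m = 0 then sqrt 2 else if m = 1 then 0 else - sqrt 2)"

definition p3r :: "nat \<Rightarrow> nat \<Rightarrow> real" where
  "p3r a b = (if p3_adj a b then 1 else 0)"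

definition phi :: "nat \<Rightarrow> (nat \<Rightarrow> nat) \<Rightarrow> (nat \<Rightarrow> nat) \<Rightarrow> real" where
  "phi n m x = (\<Prod>i<n. ev (m i) (x i))"

definition lam :: "nat set set \<Rightarrow> (nat \<Rightarrow> nat) \<Rightarrow> real" where
  "lam \<Omega> m = (\<Sum>\<beta>\<in>\<Omega>. \<Prod>i\<in>\<beta>. mu (m i))"

definition R :: "nat \<Rightarrow> nat set set \<Rightarrow> (nat \<Rightarrow> nat) \<Rightarrow> (nat \<Rightarrow> nat) \<Rightarrow> real" where
  "R n \<Omega> x y = (if neps_adj n \<Omega> x y then 1 else 0)"

lemma sq2: "sqrt 2 * sqrt 2 = (2::real)" by simp

lemma p3_eig: "m \<in> {0,1,2} \<Longrightarrow> b \<in> {0,1,2} \<Longrightarrow>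
   (\<Sum>a\<in>{0,1,2}. ev m a * p3r a b) = mu m * ev m b"
  by (auto simp: ev_def mu_def p3r_def p3_adj_def)

lemma p3_compl: "a \<in> {0,1,2} \<Longrightarrow> b \<in> {0,1,2} \<Longrightarrow>
   (\<Sum>m\<in>{0,1,2}. ev m a * ev m b) = (if a = b then 1 else 0)"
  by (auto simp: ev_def)

lemma ev_nz: "m \<in> {0,2} \<Longrightarrow> ev m a \<noteq> 0"
  by (auto simp: ev_def)

lemma p3_irrefl: "\<not> p3_adj a a" by (auto simp: p3_adj_def)

lemma prod_ind:
  "(if (\<forall>i<(n::nat). P i) then 1 else 0) = (\<Prod>i<n. if P i then 1 else (0::real))"
  by (induction n) (auto simp: less_Suc_eq)

lemma if_ex_sum:
  assumes "finite \<Omega>" and uniq: "\<And>b1 b2. b1 \<in> \<Omega> \<Longrightarrow> b2 \<in> \<Omega> \<Longrightarrow> P b1 \<Longrightarrow> P b2 \<Longrightarrow> b1 = b2"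
  shows "(if \<exists>b\<in>\<Omega>. P b then 1 else 0) = (\<Sum>b\<in>\<Omega>. if P b then 1 else (0::real))"
proof (cases "\<exists>b\<in>\<Omega>. P b")
  case True
  then obtain b0 where b0: "b0 \<in> \<Omega>" "P b0" by blast
  have "(\<Sum>b\<in>\<Omega>. if P b then 1 else (0::real)) = (\<Sum>b\<in>\<Omega>. if b = b0 then 1 else 0)"
    using uniq b0 by (intro sum.cong) auto
  also have "\<dots> = 1" using b0 assms(1) by simp
  finally show ?thesis using True by simp
qed auto

lemma R_sum:
  assumes "\<forall>\<beta>\<in>\<Omega>. \<beta> \<subseteq> {0..<n}"
  shows "R n \<Omega> w y = (\<Sum>\<beta>\<in>\<Omega>. \<Prod>i<n. (if i \<in> \<beta> then p3r (w i) (y i) else (if w i = y i then 1 else 0)))"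
proof -
  have fin: "finite \<Omega>"
    using assms by (metis finite_Pow_iff finite_atLeastLessThan finite_subset subsetI PowI)
  have "R n \<Omega> w y = (\<Sum>\<beta>\<in>\<Omega>. if (\<forall>i<n. (i \<in> \<beta> \<longrightarrow> p3_adj (w i) (y i)) \<and> (i \<notin> \<beta> \<longrightarrow> w i = y i)) then 1 else 0)"
    unfolding R_def neps_adj_def
  proof (rule if_ex_sum[OF fin])
    fix b1 b2 assume b: "b1 \<in> \<Omega>" "b2 \<in> \<Omega>"
      and P: "\<forall>i<n. (i \<in> b1 \<longrightarrow> p3_adj (w i) (y i)) \<and> (i \<notin> b1 \<longrightarrow> w i = y i)"
        "\<forall>i<n. (i \<in> b2 \<longrightarrow> p3_adj (w i) (y i)) \<and> (i \<notin> b2 \<longrightarrow> w i = y i)"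
    show "b1 = b2"
    proof (rule ccontr)
      assume "b1 \<noteq> b2"
      then obtain i where "i \<in> b1 \<and> i \<notin> b2 \<or> i \<in> b2 \<and> i \<notin> b1" by blast
      moreover have "i \<in> b1 \<Longrightarrow> i < n" using assms b by (meson atLeastLessThan_iff subsetD)
      moreover have "i \<in> b2 \<Longrightarrow> i < n" using assms b by (meson atLeastLessThan_iff subsetD)
      ultimately show False using P p3_irrefl by metis
    qed
  qed
  also have "\<dots> = (\<Sum>\<beta>\<in>\<Omega>. \<Prod>i<n. (if i \<in> \<beta> then p3r (w i) (y i) else (if w i = y i then 1 else 0)))"
    by (intro sum.cong refl, subst prod_ind, intro prod.cong refl) (auto simp: p3r_def)
  finally show ?thesis .
qed

lemma eig:
  assumes sub: "\<forall>\<beta>\<in>\<Omega>. \<beta> \<subseteq> {0..<n}" and m: "m \<in> neps_verts n" and y: "y \<in> neps_verts n"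
  shows "(\<Sum>w\<in>neps_verts n. phi n m w * R n \<Omega> w y) = lam \<Omega> m * phi n m y"
proof -
  define g where "g (\<beta>::nat set) (i::nat) (a::nat) (b::nat) = (if i \<in> \<beta> then p3r a b else (if a = b then 1 else (0::real)))" for \<beta> i a b
  have "(\<Sum>w\<in>neps_verts n. phi n m w * R n \<Omega> w y)
      = (\<Sum>w\<in>neps_verts n. \<Sum>\<beta>\<in>\<Omega>. \<Prod>i<n. ev (m i) (w i) * g \<beta> i (w i) (y i))"
    by (intro sum.cong refl) (simp add: R_sum[OF sub] phi_def g_def sum_distrib_left prod.distrib)
  also have "\<dots> = (\<Sum>\<beta>\<in>\<Omega>. \<Sum>w\<in>ext n {0,1,2}. \<Prod>i<n. ev (m i) (w i) * g \<beta> i (w i) (y i))"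
    by (subst sum.swap) (simp add: verts_ext)
  also have "\<dots> = (\<Sum>\<beta>\<in>\<Omega>. \<Prod>i<n. \<Sum>a\<in>{0,1,2}. ev (m i) a * g \<beta> i a (y i))"
    by (intro sum.cong refl, rule sum_prod_ext) simp
  also have "\<dots> = (\<Sum>\<beta>\<in>\<Omega>. \<Prod>i<n. (if i \<in> \<beta> then mu (m i) else 1) * ev (m i) (y i))"
  proof (intro sum.cong refl prod.cong)
    fix \<beta> i assume "i \<in> {..<n}"
    then have mi: "m i \<in> {0,1,2}" and yi: "y i \<in> {0,1,2}"
      using m y by (auto simp: neps_verts_def)
    show "(\<Sum>a\<in>{0,1,2}. ev (m i) a * g \<beta> i a (y i)) = (if i \<in> \<beta> then mu (m i) else 1) * ev (m i) (y i)"
    proof (cases "i \<in> \<beta>")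
      case True then show ?thesis using p3_eig[OF mi yi] by (simp add: g_def)
    next
      case False then show ?thesis using yi by (auto simp: g_def)
    qed
  qed
  also have "\<dots> = (\<Sum>\<beta>\<in>\<Omega>. (\<Prod>i\<in>\<beta>. mu (m i)) * phi n m y)"
  proof (intro sum.cong refl)
    fix \<beta> assume b: "\<beta> \<in> \<Omega>"
    have "(\<Prod>i<n. if i \<in> \<beta> then mu (m i) else 1) = (\<Prod>i\<in>{..<n} \<inter> \<beta>. mu (m i))"
      by (simp add: prod.inter_restrict)
    also have "{..<n} \<inter> \<beta> = \<beta>" using sub b atLeastLessThan_iff lessThan_iff by blast
    finally show "(\<Prod>i<n. (if i \<in> \<beta> then mu (m i) else 1) * ev (m i) (y i)) = (\<Prod>i\<in>\<beta>. mu (m i)) * phi n m y"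
      by (simp add: prod.distrib phi_def)
  qed
  also have "\<dots> = lam \<Omega> m * phi n m y" by (simp add: lam_def sum_distrib_right)
  finally show ?thesis .
qed

lemma compl:
  assumes x: "x \<in> neps_verts n" and y: "y \<in> neps_verts n"
  shows "(\<Sum>m\<in>neps_verts n. phi n m x * phi n m y) = (if x = y then 1 else 0)"
proof -
  have "(\<Sum>m\<in>neps_verts n. phi n m x * phi n m y) = (\<Sum>m\<in>ext n {0,1,2}. \<Prod>i<n. ev (m i) (x i) * ev (m i) (y i))"
    by (simp add: verts_ext phi_def prod.distrib)
  also have "\<dots> = (\<Prod>i<n. \<Sum>c\<in>{0,1,2}. ev c (x i) * ev c (y i))"
    by (rule sum_prod_ext) simp
  also have "\<dots> = (\<Prod>i<n. if x i = y i then 1 else 0)"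
    using x y by (intro prod.cong refl p3_compl) (auto simp: neps_verts_def)
  also have "\<dots> = (if \<forall>i<n. x i = y i then 1 else 0)" by (simp add: prod_ind)
  also have "(\<forall>i<n. x i = y i) = (x = y)"
  proof
    assume H: "\<forall>i<n. x i = y i"
    show "x = y"
    proof
      fix i show "x i = y i" using H x y by (cases "i < n") (auto simp: neps_verts_def)
    qed
  qed auto
  finally show ?thesis .
qed

lemma adj_mat: "neps_adj_mat n \<Omega> x y = of_real (R n \<Omega> x y)"
  by (simp add: neps_adj_mat_def R_def)

lemma pow_formula:
  assumes sub: "\<forall>\<beta>\<in>\<Omega>. \<beta> \<subseteq> {0..<n}" and x: "x \<in> neps_verts n" and y: "y \<in> neps_verts n"
  shows "neps_adj_pow n \<Omega> k x y = of_real (\<Sum>m\<in>neps_verts n. lam \<Omega> m ^ k * phi n m x * phi n m y)"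
  using y
proof (induction k arbitrary: y)
  case 0 then show ?case using compl[OF x 0] by (simp add: mult.assoc)
next
  case (Suc k)
  have "neps_adj_pow n \<Omega> (Suc k) x y
      = of_real (\<Sum>w\<in>neps_verts n. (\<Sum>m\<in>neps_verts n. lam \<Omega> m ^ k * phi n m x * phi n m w) * R n \<Omega> w y)"
    using Suc.IH by (simp add: adj_mat)
  also have "(\<Sum>w\<in>neps_verts n. (\<Sum>m\<in>neps_verts n. lam \<Omega> m ^ k * phi n m x * phi n m w) * R n \<Omega> w y)
     = (\<Sum>m\<in>neps_verts n. lam \<Omega> m ^ k * phi n m x * (\<Sum>w\<in>neps_verts n. phi n m w * R n \<Omega> w y))"
    by (simp add: sum_distrib_right sum_distrib_left mult.assoc) (rule sum.swap)
  also have "\<dots> = (\<Sum>m\<in>neps_verts n. lam \<Omega> m ^ Suc k * phi n m x * phi n m y)"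
    using Suc.prems by (intro sum.cong refl) (simp add: eig[OF sub] mult_ac)
  finally show ?case .
qed

lemma sqrt2_irr: "sqrt 2 \<notin> \<rat>"
proof
  assume "sqrt 2 \<in> \<rat>"
  then obtain m n :: nat where n: "n \<noteq> 0" and q: "\<bar>sqrt 2\<bar> = real m / real n" and cop: "coprime m n"
    by (rule Rats_abs_nat_div_natE)
  have "real m = sqrt 2 * real n" using q n by (simp add: field_simps)
  then have "real m ^ 2 = 2 * real n ^ 2" by (simp add: power_mult_distrib)
  then have eq: "m ^ 2 = 2 * n ^ 2" by (metis of_nat_eq_iff of_nat_mult of_nat_numeral of_nat_power)
  then have "even (m ^ 2)" by simp
  then have "even m" by simp
  then obtain k where k: "m = 2 * k" by blast
  with eq have "n ^ 2 = 2 * k ^ 2" by simp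
  then have "even (n ^ 2)" by simp
  then have "even n" by simp
  with \<open>even m\<close> have "2 dvd gcd m n" by simp
  moreover have "gcd m n = 1" using cop by simp
  ultimately show False by simp
qed

lemma exp_int: "exp (\<i> * complex_of_real x) = 1 \<Longrightarrow> x / (2 * pi) \<in> \<int>"
proof -
  assume "exp (\<i> * complex_of_real x) = 1"
  then have "cis x = 1" by (simp add: cis_conv_exp)
  then have "cos x = 1" by (metis Re_complex_of_real cis.sel(1) of_real_1)
  then obtain k :: int where "x = real_of_int k * 2 * pi" using cos_one_2pi_int by blast
  then show ?thesis by simp
qed

lemma term_eq: "complex_of_real (p*q) * ((\<i> * complex_of_real (-t*l))^k /\<^sub>R fact k)
   = ((- \<i> * complex_of_real t)^k / of_nat (fact k)) * complex_of_real (l^k * p * q)"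
proof -
  have e: "\<i> * complex_of_real (-t*l) = (- \<i> * complex_of_real t) * complex_of_real l" by simp
  have f: "(fact k :: complex) = complex_of_real (fact k)" by simp
  show ?thesis unfolding e power_mult_distrib scaleR_conv_of_real
    by (simp add: divide_inverse mult_ac of_real_inverse[symmetric])
qed

lemma transition_formula:
  assumes sub: "\<forall>\<beta>\<in>\<Omega>. \<beta> \<subseteq> {0..<n}" and u: "u \<in> neps_verts n" and v: "v \<in> neps_verts n"
  shows "neps_transition n \<Omega> t u v =
     (\<Sum>m\<in>neps_verts n. complex_of_real (phi n m u * phi n m v) * exp (\<i> * complex_of_real (- t * lam \<Omega> m)))"
proof -
  have "(\<lambda>k. \<Sum>m\<in>neps_verts n. complex_of_real (phi n m u * phi n m v) * ((\<i> * complex_of_real (- t * lam \<Omega> m)) ^ k /\<^sub>R fact k))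
     sums (\<Sum>m\<in>neps_verts n. complex_of_real (phi n m u * phi n m v) * exp (\<i> * complex_of_real (- t * lam \<Omega> m)))"
    by (intro sums_sum sums_mult exp_converges)
  moreover have "(\<lambda>k. \<Sum>m\<in>neps_verts n. complex_of_real (phi n m u * phi n m v) * ((\<i> * complex_of_real (- t * lam \<Omega> m)) ^ k /\<^sub>R fact k))
     = (\<lambda>k. ((- \<i> * complex_of_real t) ^ k / of_nat (fact k)) * neps_adj_pow n \<Omega> k u v)"
  proof
    fix k
    show "(\<Sum>m\<in>neps_verts n. complex_of_real (phi n m u * phi n m v) * ((\<i> * complex_of_real (- t * lam \<Omega> m)) ^ k /\<^sub>R fact k))
      = ((- \<i> * complex_of_real t) ^ k / of_nat (fact k)) * neps_adj_pow n \<Omega> k u v"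
      unfolding pow_formula[OF sub u v] of_real_sum sum_distrib_left
      by (intro sum.cong refl term_eq)
  qed
  ultimately have "(\<lambda>k. ((- \<i> * complex_of_real t) ^ k / of_nat (fact k)) * neps_adj_pow n \<Omega> k u v)
     sums (\<Sum>m\<in>neps_verts n. complex_of_real (phi n m u * phi n m v) * exp (\<i> * complex_of_real (- t * lam \<Omega> m)))"
    by simp
  then show ?thesis unfolding neps_transition_def by (rule sums_unique[symmetric])
qed

definition sg :: "nat \<Rightarrow> real" where "sg a = (if a = 0 then 1 else -1)"
definition chi :: "nat set \<Rightarrow> (nat \<Rightarrow> nat) \<Rightarrow> real" where "chi \<gamma> e = (\<Prod>i\<in>\<gamma>. sg (e i))"

lemma chi_restrict: "\<gamma> \<subseteq> {0..<n} \<Longrightarrow> chi \<gamma> e = (\<Prod>i<n. if i \<in> \<gamma> then sg (e i) else 1)"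
proof -
  assume a: "\<gamma> \<subseteq> {0..<n}"
  have "(\<Prod>i<n. if i \<in> \<gamma> then sg (e i) else 1) = (\<Prod>i\<in>{..<n} \<inter> \<gamma>. sg (e i))"
    by (simp add: prod.inter_restrict)
  also have "{..<n} \<inter> \<gamma> = \<gamma>" using a atLeastLessThan_iff lessThan_iff by blast
  finally show ?thesis by (simp add: chi_def)
qed

lemma prod_ind2:
  "(\<Prod>i<(n::nat). if P i then 2 else (0::real)) = (if (\<forall>i<n. P i) then 2 ^ n else 0)"
  by (induction n) (auto simp: less_Suc_eq)

lemma orth:
  assumes g: "\<gamma> \<subseteq> {0..<n}" and b: "\<beta> \<subseteq> {0..<n}"
  shows "(\<Sum>e\<in>ext n {0,2}. chi \<gamma> e * chi \<beta> e) = (if \<gamma> = \<beta> then 2 ^ n else 0)"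
proof -
  have "(\<Sum>e\<in>ext n {0,2}. chi \<gamma> e * chi \<beta> e)
     = (\<Sum>e\<in>ext n {0,2}. \<Prod>i<n. (if i \<in> \<gamma> then sg (e i) else 1) * (if i \<in> \<beta> then sg (e i) else 1))"
    by (simp add: chi_restrict[OF g] chi_restrict[OF b] prod.distrib)
  also have "\<dots> = (\<Prod>i<n. \<Sum>a\<in>{0,2}. (if i \<in> \<gamma> then sg a else 1) * (if i \<in> \<beta> then sg a else 1))"
    by (rule sum_prod_ext) simp
  also have "\<dots> = (\<Prod>i<n. if (i \<in> \<gamma>) = (i \<in> \<beta>) then 2 else 0)"
    by (intro prod.cong refl) (auto simp: sg_def)
  also have "\<dots> = (if \<forall>i<n. (i \<in> \<gamma>) = (i \<in> \<beta>) then 2 ^ n else 0)" by (rule prod_ind2)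
  also have "(\<forall>i<n. (i \<in> \<gamma>) = (i \<in> \<beta>)) = (\<gamma> = \<beta>)"
    using g b atLeastLessThan_iff by blast
  finally show ?thesis .
qed

lemma lam_E:
  assumes sub: "\<forall>\<beta>\<in>\<Omega>. \<beta> \<subseteq> {0..<n}" and e: "e \<in> ext n {0,2}"
  shows "lam \<Omega> e = (\<Sum>\<beta>\<in>\<Omega>. sqrt 2 ^ card \<beta> * chi \<beta> e)"
  unfolding lam_def
proof (intro sum.cong refl)
  fix \<beta> assume b: "\<beta> \<in> \<Omega>"
  have "(\<Prod>i\<in>\<beta>. mu (e i)) = (\<Prod>i\<in>\<beta>. sqrt 2 * sg (e i))"
  proof (intro prod.cong refl)
    fix i assume "i \<in> \<beta>"
    then have "i < n" using sub b by (meson atLeastLessThan_iff subsetD)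
    then have "e i \<in> {0,2}" using e by (auto simp: ext_def)
    then show "mu (e i) = sqrt 2 * sg (e i)" by (auto simp: mu_def sg_def)
  qed
  then show "(\<Prod>i\<in>\<beta>. mu (e i)) = sqrt 2 ^ card \<beta> * chi \<beta> e"
    by (simp add: prod.distrib chi_def)
qed

lemma fourier:
  assumes sub: "\<forall>\<beta>\<in>\<Omega>. \<beta> \<subseteq> {0..<n}" and g: "\<gamma> \<in> \<Omega>"
  shows "(\<Sum>e\<in>ext n {0,2}. chi \<gamma> e * lam \<Omega> e) = 2 ^ n * sqrt 2 ^ card \<gamma>"
proof -
  have fin: "finite \<Omega>"
    using sub by (metis finite_Pow_iff finite_atLeastLessThan finite_subset subsetI PowI)
  have "(\<Sum>e\<in>ext n {0,2}. chi \<gamma> e * lam \<Omega> e)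
     = (\<Sum>e\<in>ext n {0,2}. \<Sum>\<beta>\<in>\<Omega>. sqrt 2 ^ card \<beta> * (chi \<gamma> e * chi \<beta> e))"
    by (intro sum.cong refl) (simp add: lam_E[OF sub] sum_distrib_left mult_ac)
  also have "\<dots> = (\<Sum>\<beta>\<in>\<Omega>. sqrt 2 ^ card \<beta> * (\<Sum>e\<in>ext n {0,2}. chi \<gamma> e * chi \<beta> e))"
    by (subst sum.swap) (simp add: sum_distrib_left)
  also have "\<dots> = (\<Sum>\<beta>\<in>\<Omega>. if \<beta> = \<gamma> then sqrt 2 ^ card \<beta> * 2 ^ n else 0)"
    using sub g by (intro sum.cong refl) (simp add: orth)
  also have "\<dots> = 2 ^ n * sqrt 2 ^ card \<gamma>" using fin g by simp
  finally show ?thesis .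
qed

lemma chi_Ints: "finite \<gamma> \<Longrightarrow> chi \<gamma> e \<in> \<int>"
  unfolding chi_def by (intro Ints_prod) (simp add: sg_def)

lemma chi_sum0:
  assumes "\<gamma> \<subseteq> {0..<n}" "\<gamma> \<noteq> {}"
  shows "(\<Sum>e\<in>ext n {0,2}. chi \<gamma> e) = 0"
  using orth[OF assms(1), of "{}"] assms by (simp add: chi_def)

lemma exp_eq_diff: "exp (x::complex) = exp y \<Longrightarrow> exp (x - y) = 1"
  by (simp add: exp_diff)

theorem theorem2p3:
  fixes n :: nat and \<Omega> \<Omega>e \<Omega>o :: "nat set set"
  assumes "n \<ge> 1"
    and "\<Omega> = \<Omega>e \<union> \<Omega>o"
    and "\<forall>\<beta>\<in>\<Omega>. \<beta> \<subseteq> {0..<n} \<and> \<beta> \<noteq> {}"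
    and "\<Omega>e \<noteq> {}" and "\<Omega>o \<noteq> {}"
    and "\<forall>\<beta>\<in>\<Omega>e. even (card \<beta>)"
    and "\<forall>\<beta>\<in>\<Omega>o. odd (card \<beta>)"
  shows "\<not> (\<exists>u\<in>neps_verts n. \<exists>v\<in>neps_verts n. u \<noteq> v \<and> neps_pst n \<Omega> u v)"
proof
  assume "\<exists>u\<in>neps_verts n. \<exists>v\<in>neps_verts n. u \<noteq> v \<and> neps_pst n \<Omega> u v"
  then obtain u v t where u: "u \<in> neps_verts n" and v: "v \<in> neps_verts n" and uv: "u \<noteq> v"
    and U1: "cmod (neps_transition n \<Omega> t u v) = 1"
    by (auto simp: neps_pst_def)
  define V where "V = neps_verts n"
  define E where "E = ext n {0,2}"
  have sub: "\<forall>\<beta>\<in>\<Omega>. \<beta> \<subseteq> {0..<n}" using assms(3) by blast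
  define z where "z m = exp (\<i> * complex_of_real (- t * lam \<Omega> m))" for m
  define a where "a m = complex_of_real (phi n m u) * z m" for m
  define b where "b m = phi n m v" for m
  define S where "S = neps_transition n \<Omega> t u v"
  have finV: "finite V" by (simp add: V_def verts_ext ext_finite)
  have S_eq: "S = (\<Sum>m\<in>V. a m * complex_of_real (b m))"
    using transition_formula[OF sub u v] by (simp add: S_def V_def a_def b_def z_def mult_ac)
  have zn: "cmod (z m) = 1" for m by (simp add: z_def cis_conv_exp[symmetric])
  have zz: "z m * cnj (z m) = 1" for m
    using complex_norm_square[of "z m"] zn[of m] by simp
  have Sn1: "cmod S = 1" using U1 by (simp add: S_def)
  have Sn: "S * cnj S = 1" using complex_norm_square[of S] Sn1 by simp
  have sa: "(\<Sum>m\<in>V. a m * cnj (a m)) = 1"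
  proof -
    have "(\<Sum>m\<in>V. a m * cnj (a m)) = (\<Sum>m\<in>V. complex_of_real (phi n m u * phi n m u))"
    proof (intro sum.cong refl)
      fix m
      have "a m * cnj (a m) = complex_of_real (phi n m u * phi n m u) * (z m * cnj (z m))"
        by (simp add: a_def mult_ac)
      then show "a m * cnj (a m) = complex_of_real (phi n m u * phi n m u)" using zz by simp
    qed
    also have "\<dots> = complex_of_real (\<Sum>m\<in>V. phi n m u * phi n m u)" by (simp only: of_real_sum)
    also have "\<dots> = 1" using compl[OF u u] by (simp add: V_def)
    finally show ?thesis .
  qed
  have sb: "(\<Sum>m\<in>V. b m * b m) = 1" using compl[OF v v] by (simp add: V_def b_def)
  have sab: "(\<Sum>m\<in>V. cnj (a m) * complex_of_real (b m)) = cnj S"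
    by (simp add: S_eq)
  have key: "(\<Sum>m\<in>V. (a m - S * complex_of_real (b m)) * cnj (a m - S * complex_of_real (b m))) = 0"
  proof -
    have "(\<Sum>m\<in>V. (a m - S * complex_of_real (b m)) * cnj (a m - S * complex_of_real (b m)))
       = (\<Sum>m\<in>V. a m * cnj (a m)) - cnj S * (\<Sum>m\<in>V. a m * complex_of_real (b m))
         - S * (\<Sum>m\<in>V. cnj (a m) * complex_of_real (b m)) + (S * cnj S) * complex_of_real (\<Sum>m\<in>V. b m * b m)"
      by (simp add: algebra_simps sum.distrib sum_subtractf sum_distrib_left of_real_sum)
    also have "\<dots> = 0" using sa sb sab Sn S_eq[symmetric] by (simp add: mult.commute)
    finally show ?thesis .
  qed
  have "complex_of_real (\<Sum>m\<in>V. (cmod (a m - S * complex_of_real (b m)))\<^sup>2) = 0"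
    unfolding of_real_sum complex_norm_square using key by simp
  then have sq0: "(\<Sum>m\<in>V. (cmod (a m - S * complex_of_real (b m)))\<^sup>2) = 0" by (simp only: of_real_eq_0_iff)
  have aSb: "\<forall>m\<in>V. a m = S * complex_of_real (b m)"
  proof
    fix m assume m: "m \<in> V"
    from sq0 have "\<forall>m\<in>V. (cmod (a m - S * complex_of_real (b m)))\<^sup>2 = 0"
      by (subst (asm) sum_nonneg_eq_0_iff[OF finV]) auto
    then show "a m = S * complex_of_real (b m)" using m by simp
  qed
  have EV: "E \<subseteq> V" by (auto simp: E_def V_def ext_def neps_verts_def)
  have zsq: "z e ^ 2 = S ^ 2" if e: "e \<in> E" for e
  proof -
    have nz: "phi n e u \<noteq> 0"
      unfolding phi_def
    proof -
      have "\<forall>i\<in>{..<n}. ev (e i) (u i) \<noteq> 0"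
      proof
        fix i assume "i \<in> {..<n}"
        then have "e i \<in> {0,2}" using e by (auto simp: E_def ext_def)
        then show "ev (e i) (u i) \<noteq> 0" by (rule ev_nz)
      qed
      then show "(\<Prod>i<n. ev (e i) (u i)) \<noteq> 0" by (simp add: prod_zero_iff)
    qed
    have eq: "complex_of_real (phi n e u) * z e = S * complex_of_real (phi n e v)"
      using aSb e EV by (auto simp: a_def b_def)
    then have "cmod (complex_of_real (phi n e u) * z e) = cmod (S * complex_of_real (phi n e v))" by simp
    then have "\<bar>phi n e u\<bar> = \<bar>phi n e v\<bar>" using zn Sn1 by (simp add: norm_mult)
    then have sq: "phi n e v ^ 2 = phi n e u ^ 2" by (metis power2_abs)
    from eq have "(complex_of_real (phi n e u) * z e) ^ 2 = (S * complex_of_real (phi n e v)) ^ 2" by simp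
    then have h: "complex_of_real (phi n e u) ^ 2 * z e ^ 2 = S ^ 2 * complex_of_real (phi n e v) ^ 2"
      by (simp only: power_mult_distrib)
    have sq': "complex_of_real (phi n e v) ^ 2 = complex_of_real (phi n e u) ^ 2"
      using sq by (metis of_real_power)
    have "complex_of_real (phi n e u) ^ 2 * z e ^ 2 = complex_of_real (phi n e u) ^ 2 * S ^ 2"
      using h sq' by (simp add: mult.commute)
    moreover have "complex_of_real (phi n e u) ^ 2 \<noteq> 0" using nz by simp
    ultimately show ?thesis by simp
  qed
  define e0 :: "nat \<Rightarrow> nat" where "e0 = (\<lambda>_. 0)"
  have e0E: "e0 \<in> E" by (simp add: e0_def E_def ext_def)
  define c where "c = - t / pi"
  have intc: "c * (lam \<Omega> e - lam \<Omega> e0) \<in> \<int>" if e: "e \<in> E" for e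
  proof -
    have zsq': "z m ^ 2 = exp (\<i> * complex_of_real (- 2 * t * lam \<Omega> m))" for m
    proof -
      have "z m ^ 2 = exp (\<i> * complex_of_real (- t * lam \<Omega> m) + \<i> * complex_of_real (- t * lam \<Omega> m))"
        by (simp only: z_def power2_eq_square exp_add)
      also have "\<i> * complex_of_real (- t * lam \<Omega> m) + \<i> * complex_of_real (- t * lam \<Omega> m)
          = \<i> * complex_of_real (- 2 * t * lam \<Omega> m)" by simp
      finally show ?thesis .
    qed
    have "exp (\<i> * complex_of_real (- 2 * t * lam \<Omega> e)) = exp (\<i> * complex_of_real (- 2 * t * lam \<Omega> e0))"
      using zsq[OF e] zsq[OF e0E] zsq' by metis
    then have "exp (\<i> * complex_of_real (- 2 * t * lam \<Omega> e) - \<i> * complex_of_real (- 2 * t * lam \<Omega> e0)) = 1"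
      by (rule exp_eq_diff)
    moreover have "\<i> * complex_of_real (- 2 * t * lam \<Omega> e) - \<i> * complex_of_real (- 2 * t * lam \<Omega> e0)
        = \<i> * complex_of_real (- 2 * t * lam \<Omega> e - (- 2 * t * lam \<Omega> e0))"
      by (simp add: algebra_simps)
    ultimately have "(- 2 * t * lam \<Omega> e - (- 2 * t * lam \<Omega> e0)) / (2 * pi) \<in> \<int>"
      using exp_int by metis
    moreover have "(- 2 * t * lam \<Omega> e - (- 2 * t * lam \<Omega> e0)) / (2 * pi) = c * (lam \<Omega> e - lam \<Omega> e0)"
      by (simp add: c_def field_simps)
    ultimately show ?thesis by simp
  qed
  have intg: "c * 2 ^ n * sqrt 2 ^ card \<gamma> \<in> \<int>" if g: "\<gamma> \<in> \<Omega>" for \<gamma>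
  proof -
    have gs: "\<gamma> \<subseteq> {0..<n}" "\<gamma> \<noteq> {}" using assms(3) g by auto
    have fg: "finite \<gamma>" using gs(1) finite_subset by blast
    have "(\<Sum>e\<in>E. chi \<gamma> e * (c * (lam \<Omega> e - lam \<Omega> e0))) \<in> \<int>"
      by (rule Ints_sum, rule Ints_mult[OF chi_Ints[OF fg] intc])
    moreover have "(\<Sum>e\<in>E. chi \<gamma> e * (c * (lam \<Omega> e - lam \<Omega> e0)))
        = c * (\<Sum>e\<in>E. chi \<gamma> e * lam \<Omega> e) - c * lam \<Omega> e0 * (\<Sum>e\<in>E. chi \<gamma> e)"
      by (simp add: algebra_simps sum_subtractf sum_distrib_left)
    moreover have "(\<Sum>e\<in>E. chi \<gamma> e) = 0" using chi_sum0[OF gs] by (simp add: E_def)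
    moreover have "(\<Sum>e\<in>E. chi \<gamma> e * lam \<Omega> e) = 2 ^ n * sqrt 2 ^ card \<gamma>"
      using fourier[OF sub g] by (simp add: E_def)
    ultimately show ?thesis by (simp add: mult.assoc)
  qed
  obtain ge where ge: "ge \<in> \<Omega>e" using assms(4) by blast
  obtain go where go: "go \<in> \<Omega>o" using assms(5) by blast
  obtain k where k: "card ge = 2 * k" using assms(6) ge by blast
  obtain j where j: "card go = 2 * j + 1" using assms(7) go oddE by blast
  have s2: "sqrt 2 ^ 2 = (2::real)" by simp
  have A: "c * 2 ^ n * 2 ^ k \<in> \<int>"
    using intg[of ge] ge assms(2) k by (simp add: power_mult s2)
  have B: "c * 2 ^ n * 2 ^ j * sqrt 2 \<in> \<int>"
    using intg[of go] go assms(2) j by (simp add: power_add power_mult s2 mult.assoc mult.commute[of "sqrt 2"])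
  have c0: "c = 0"
  proof (rule ccontr)
    assume "c \<noteq> 0"
    have "sqrt 2 = (c * 2 ^ n * 2 ^ j * sqrt 2) * 2 ^ k / ((c * 2 ^ n * 2 ^ k) * 2 ^ j)"
      using \<open>c \<noteq> 0\<close> by (simp add: field_simps)
    moreover have "(c * 2 ^ n * 2 ^ j * sqrt 2) * 2 ^ k / ((c * 2 ^ n * 2 ^ k) * 2 ^ j) \<in> \<rat>"
    proof -
      have AQ: "c * 2 ^ n * 2 ^ k \<in> \<rat>" using A Ints_subset_Rats by blast
      have BQ: "c * 2 ^ n * 2 ^ j * sqrt 2 \<in> \<rat>" using B Ints_subset_Rats by blast
      have kQ: "(2::real) ^ k \<in> \<rat>" and jQ: "(2::real) ^ j \<in> \<rat>" by simp_all
      show ?thesis by (rule Rats_divide[OF Rats_mult[OF BQ kQ] Rats_mult[OF AQ jQ]])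
    qed
    ultimately show False using sqrt2_irr by simp
  qed
  then have t0: "t = 0" by (simp add: c_def)
  have "S = complex_of_real (\<Sum>m\<in>neps_verts n. phi n m u * phi n m v)"
    using transition_formula[OF sub u v] t0 by (simp add: S_def of_real_sum)
  also have "\<dots> = 0" using compl[OF u v] uv by simp
  finally show False using Sn1 by simp
qed

end
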